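(* Let $E$ be a finite nonempty set, $f:2^E\to\mathbb{N}$ an integral polymatroid rank function, $d\in\mathbb{N}$, $\vec t\in\mathbb{N}^E$, and let $C_e:\mathbb{N}\times\mathbb{N}\to\mathbb{R}_+$, $e\in E$, be regular functions. Let $\vec x$ be an optimal solution of $P(\vec t,d)$, let $e^*\in E$ and $\vec t'=\vec t+\chi_{e^*}$. Define $g^*\in\arg\min_{g\in D_{e^*}(\vec x)} C^+_g(x_g;t_g)$ if $D_{e^*}(\vec x)\neq\emptyset$, and $g^*=e^*$ otherwise. Then the better (with respect to the objective of $P(\vec t',d)$) of the two solutions $\vec x$ and $\vec x-\chi_{e^*}+\chi_{g^*}$ is an optimal solution of $P(\vec t',d)$.
   Context: $\mathbb{N}=\{0,1,2,\dots\}$. A set function $f:2^E\to\mathbb{N}$ is an integral polymatroid rank function if $f(\emptyset)=0$, $f(U)\le f(V)$ for $U\subseteq V$, and $f(U)+f(V)\ge f(U\cup V)+f(U\cap V)$ for all $U,V\subseteq E$. For $\vec x\in\mathbb{N}^E$ and $U\subseteq E$, $x(U)=\sum_{e\in U}x_e$. For $d\in\mathbb{N}$, $\mathbb{B}_f(d)=\{\vec x\in\mathbb{N}^E: x(U)\le f(U)\ \forall U\subseteq E,\ x(E)=d\}$. $P(\vec t,d)$ denotes the problem: minimize $\sum_{e\in E}C_e(x_e;t_e)$ subject to $\vec x\in\mathbb{B}_f(d)$. For $C:\mathbb{N}\times\mathbb{N}\to\mathbb{R}$, $C^-(x;t)=C(x;t)-C(x-1;t)$ (for $x\ge1$) and $C^+(x;t)=C(x+1;t)-C(x;t)$.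 $C$ is regular if $C^-(x;t)\le C^-(x;t+1)$ and $C^-(x;t+1)\le C^-(x+1;t)$ for all $x\ge 1$, $t\in\mathbb{N}$. $\chi_e\in\mathbb{N}^E$ is the unit vector of coordinate $e$. For $\vec x\in\mathbb{B}_f(d)$ and $e\in E$, $D_e(\vec x)=\{g\in E\setminus\{e\}: \vec x+\chi_g-\chi_e\in\mathbb{B}_f(d)\}$. *)

theory Defs
  imports Complex_Main
begin

text \<open>Vectors in N^E are represented as functions 'e => nat that vanish outside E.\<close>

definition polymatroid_rank :: "'e set \<Rightarrow> ('e set \<Rightarrow> nat) \<Rightarrow> bool" where
  "polymatroid_rank E f \<longleftrightarrow>
     f {} = 0 \<and>
     (\<forall>U V. U \<subseteq> V \<and> V \<subseteq> E \<longrightarrow> f U \<le> f V) \<and>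
     (\<forall>U V. U \<subseteq> E \<and> V \<subseteq> E \<longrightarrow> f (U \<union> V) + f (U \<inter> V) \<le> f U + f V)"

definition chi :: "'e \<Rightarrow> 'e \<Rightarrow> nat" where
  "chi e = (\<lambda>g. if g = e then 1 else 0)"

definition base_set :: "'e set \<Rightarrow> ('e set \<Rightarrow> nat) \<Rightarrow> nat \<Rightarrow> ('e \<Rightarrow> nat) set" where
  "base_set E f d = {x. (\<forall>e. e \<notin> E \<longrightarrow> x e = 0) \<and>
                       (\<forall>U. U \<subseteq> E \<longrightarrow> sum x U \<le> f U) \<and> sum x E = d}"

definition objective :: "'e set \<Rightarrow> ('e \<Rightarrow> nat \<Rightarrow> nat \<Rightarrow> real) \<Rightarrow> ('e \<Rightarrow> nat) \<Rightarrow> ('e \<Rightarrow> nat) \<Rightarrow> real" where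
  "objective E C t x = (\<Sum>e\<in>E. C e (x e) (t e))"

definition optimal_sol :: "'e set \<Rightarrow> ('e set \<Rightarrow> nat) \<Rightarrow> ('e \<Rightarrow> nat \<Rightarrow> nat \<Rightarrow> real)
    \<Rightarrow> ('e \<Rightarrow> nat) \<Rightarrow> nat \<Rightarrow> ('e \<Rightarrow> nat) \<Rightarrow> bool" where
  "optimal_sol E f C t d x \<longleftrightarrow> x \<in> base_set E f d \<and>
     (\<forall>y \<in> base_set E f d. objective E C t x \<le> objective E C t y)"

definition Cminus :: "(nat \<Rightarrow> nat \<Rightarrow> real) \<Rightarrow> nat \<Rightarrow> nat \<Rightarrow> real" where
  "Cminus C x t = C x t - C (x - 1) t"

definition Cplus :: "(nat \<Rightarrow> nat \<Rightarrow> real) \<Rightarrow> nat \<Rightarrow> nat \<Rightarrow> real" where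
  "Cplus C x t = C (x + 1) t - C x t"

definition regular :: "(nat \<Rightarrow> nat \<Rightarrow> real) \<Rightarrow> bool" where
  "regular C \<longleftrightarrow> (\<forall>x t. x \<ge> 1 \<longrightarrow>
      Cminus C x t \<le> Cminus C x (t + 1) \<and> Cminus C x (t + 1) \<le> Cminus C (x + 1) t)"

definition Dset :: "'e set \<Rightarrow> ('e set \<Rightarrow> nat) \<Rightarrow> nat \<Rightarrow> ('e \<Rightarrow> nat) \<Rightarrow> 'e \<Rightarrow> 'e set" where
  "Dset E f d x e = {g \<in> E - {e}. (\<lambda>h. x h + chi g h - chi e h) \<in> base_set E f d}"

end

theory Submission
  imports Defs
begin

lemma sum_chi_int: assumes "finite U" shows "(\<Sum>h\<in>U. int (chi g h)) = (if g \<in> U then 1 else 0)"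
proof -
  have eq: "(\<lambda>h. int (chi g h)) = (\<lambda>h. if h = g then 1 else 0)" by (auto simp: chi_def fun_eq_iff)
  show ?thesis unfolding eq using assms by (simp add: sum.delta)
qed

lemma sum_mv_int:
  assumes "finite U" "g \<noteq> e" "x e \<ge> 1"
  shows "int (\<Sum>h\<in>U. x h + chi g h - chi e h) = int (sum x U) + (if g \<in> U then 1 else 0) - (if e \<in> U then 1 else 0)"
proof -
  have pt: "\<And>h. int (x h + chi g h - chi e h) = int (x h) + int (chi g h) - int (chi e h)"
    using assms by (auto simp: chi_def)
  have "int (\<Sum>h\<in>U. x h + chi g h - chi e h) = (\<Sum>h\<in>U. int (x h) + int (chi g h) - int (chi e h))"
    unfolding of_nat_sum pt ..
  also have "\<dots> = int (sum x U) + (\<Sum>h\<in>U. int (chi g h)) - (\<Sum>h\<in>U. int (chi e h))"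
    by (simp add: sum.distrib sum_subtractf of_nat_sum)
  finally show ?thesis using sum_chi_int[OF assms(1)] by simp
qed

lemma mv_in_base:
  assumes fin: "finite E" and xB: "x \<in> base_set E f d" and eE: "e \<in> E" and gE: "g \<in> E"
    and ne: "g \<noteq> e" and x1: "x e \<ge> 1"
    and tight: "\<forall>U. U \<subseteq> E \<longrightarrow> g \<in> U \<longrightarrow> e \<notin> U \<longrightarrow> sum x U < f U"
  shows "(\<lambda>h. x h + chi g h - chi e h) \<in> base_set E f d"
proof -
  have o: "\<forall>h. h \<notin> E \<longrightarrow> x h + chi g h - chi e h = 0"
    using xB eE gE by (auto simp: base_set_def chi_def)
  have u: "\<forall>U. U \<subseteq> E \<longrightarrow> (\<Sum>h\<in>U. x h + chi g h - chi e h) \<le> f U"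
  proof (intro allI impI)
    fix U assume U: "U \<subseteq> E"
    hence fU: "finite U" using fin finite_subset by blast
    have le: "sum x U \<le> f U" using xB U by (auto simp: base_set_def)
    have "int (\<Sum>h\<in>U. x h + chi g h - chi e h) \<le> int (f U)"
    proof -
      have eq: "int (\<Sum>h\<in>U. x h + chi g h - chi e h) = int (sum x U) + (if g \<in> U then 1 else 0) - (if e \<in> U then 1 else 0)"
        by (rule sum_mv_int[of U g e x, OF fU ne x1])
      have "g \<in> U \<Longrightarrow> e \<notin> U \<Longrightarrow> sum x U < f U" using tight U by blast
      hence lt: "g \<in> U \<Longrightarrow> e \<notin> U \<Longrightarrow> int (sum x U) < int (f U)" by (metis of_nat_less_iff)
      have le': "int (sum x U) \<le> int (f U)" using le by (simp only: of_nat_le_iff)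
      show ?thesis unfolding eq using le' lt by (cases "g \<in> U"; cases "e \<in> U"; simp)
    qed
    thus "(\<Sum>h\<in>U. x h + chi g h - chi e h) \<le> f U" by (metis of_nat_le_iff)
  qed
  have s: "(\<Sum>h\<in>E. x h + chi g h - chi e h) = d"
  proof -
    have sd: "sum x E = d" using xB by (simp add: base_set_def)
    have "int (\<Sum>h\<in>E. x h + chi g h - chi e h) = int (sum x E)"
      using sum_mv_int[of E g e x, OF fin ne x1] eE gE by (simp del: of_nat_sum)
    thus ?thesis using sd by (metis of_nat_eq_iff)
  qed
  show ?thesis using o u s by (simp add: base_set_def)
qed

lemma mv_base_pos:
  assumes fin: "finite E" and xB: "x \<in> base_set E f d" and eE: "e \<in> E" and gE: "g \<in> E"
    and ne: "g \<noteq> e" and yB: "(\<lambda>h. x h + chi g h - chi e h) \<in> base_set E f d"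
  shows "x e \<ge> 1"
proof (rule ccontr)
  assume "\<not> x e \<ge> 1"
  hence x0: "x e = 0" by simp
  have eq: "(\<lambda>h. x h + chi g h - chi e h) = (\<lambda>h. x h + chi g h)"
    using x0 ne by (auto simp: chi_def)
  have "(\<Sum>h\<in>E. x h + chi g h) = sum x E + sum (chi g) E" by (simp add: sum.distrib)
  also have "sum (chi g) E = 1" using fin gE unfolding chi_def by (simp add: sum.delta')
  finally show False using yB xB unfolding eq by (simp add: base_set_def)
qed

lemma tight_ui:
  assumes pm: "polymatroid_rank E f" and fin: "finite E"
    and feas: "\<forall>U. U \<subseteq> E \<longrightarrow> sum z U \<le> f U"
    and U: "U \<subseteq> E" "sum z U = f U" and V: "V \<subseteq> E" "sum z V = f V"
  shows "sum z (U \<union> V) = f (U \<union> V) \<and> sum z (U \<inter> V) = f (U \<inter> V)"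
proof -
  have fU: "finite U" "finite V" using U V fin finite_subset by auto
  have "sum z (U \<union> V) + sum z (U \<inter> V) = sum z U + sum z V" by (rule sum.union_inter[OF fU])
  moreover have "f (U \<union> V) + f (U \<inter> V) \<le> f U + f V" using pm U V by (auto simp: polymatroid_rank_def)
  moreover have "sum z (U \<union> V) \<le> f (U \<union> V)" using feas U V by auto
  moreover have "U \<inter> V \<subseteq> E" using U by blast
  hence "sum z (U \<inter> V) \<le> f (U \<inter> V)" using feas by blast
  ultimately show ?thesis using U V by linarith
qed

lemma tight_Inter:
  assumes pm: "polymatroid_rank E f" and fin: "finite E"
    and feas: "\<forall>U. U \<subseteq> E \<longrightarrow> sum z U \<le> f U"
  shows "finite G \<Longrightarrow> G \<noteq> {} \<Longrightarrow> (\<forall>g\<in>G. S g \<subseteq> E \<and> sum z (S g) = f (S g)) \<Longrightarrow>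
     (\<Inter>g\<in>G. S g) \<subseteq> E \<and> sum z (\<Inter>g\<in>G. S g) = f (\<Inter>g\<in>G. S g)"
proof (induction G rule: finite_ne_induct)
  case (singleton x) thus ?case by simp
next
  case (insert x F)
  thus ?case using tight_ui[OF pm fin feas, of "S x" "\<Inter>g\<in>F. S g"] by auto
qed

lemma tight_Union:
  assumes pm: "polymatroid_rank E f" and fin: "finite E"
    and feas: "\<forall>U. U \<subseteq> E \<longrightarrow> sum z U \<le> f U"
  shows "finite G \<Longrightarrow> (\<forall>g\<in>G. S g \<subseteq> E \<and> sum z (S g) = f (S g)) \<Longrightarrow>
     (\<Union>g\<in>G. S g) \<subseteq> E \<and> sum z (\<Union>g\<in>G. S g) = f (\<Union>g\<in>G. S g)"
proof (induction G rule: finite_induct)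
  case empty thus ?case using pm by (simp add: polymatroid_rank_def)
next
  case (insert x F)
  thus ?case using tight_ui[OF pm fin feas, of "S x" "\<Union>g\<in>F. S g"] by auto
qed


lemma exchange:
  assumes fin: "finite E" and pm: "polymatroid_rank E f"
    and xB: "x \<in> base_set E f d" and zB: "z \<in> base_set E f d"
    and eE: "e \<in> E" and lt: "z e < x e"
  shows "\<exists>g\<in>E. g \<noteq> e \<and> x g < z g \<and> (\<lambda>h. x h + chi g h - chi e h) \<in> base_set E f d
            \<and> (\<lambda>h. z h + chi e h - chi g h) \<in> base_set E f d"
proof (rule ccontr)
  assume neg: "\<not> ?thesis"
  have xfeas: "\<forall>U. U \<subseteq> E \<longrightarrow> sum x U \<le> f U" and zfeas: "\<forall>U. U \<subseteq> E \<longrightarrow> sum z U \<le> f U"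
    using xB zB by (auto simp: base_set_def)
  have xsum: "sum x E = d" and zsum: "sum z E = d" using xB zB by (auto simp: base_set_def)
  define G where "G = {g\<in>E. x g < z g}"
  define PU where "PU g = (\<lambda>U. U \<subseteq> E \<and> e \<in> U \<and> g \<notin> U \<and> sum z U = f U)" for g
  define PV where "PV g = (\<lambda>V. V \<subseteq> E \<and> g \<in> V \<and> e \<notin> V \<and> sum x V = f V)" for g
  define G1 where "G1 = {g\<in>G. \<exists>U. PU g U}"
  define G2 where "G2 = G - G1"
  have alt: "(\<exists>U. PU g U) \<or> (\<exists>V. PV g V)" if gG: "g \<in> G" for g
  proof -
    have gE: "g \<in> E" and xz: "x g < z g" using gG by (auto simp: G_def)
    have ge: "g \<noteq> e" using xz lt by auto
    have x1: "x e \<ge> 1" using lt by simp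
    have z1: "z g \<ge> 1" using xz by simp
    have "\<not> ((\<lambda>h. x h + chi g h - chi e h) \<in> base_set E f d \<and> (\<lambda>h. z h + chi e h - chi g h) \<in> base_set E f d)"
      using neg gE ge xz by blast
    hence "\<not> (\<forall>U. U \<subseteq> E \<longrightarrow> g \<in> U \<longrightarrow> e \<notin> U \<longrightarrow> sum x U < f U) \<or>
           \<not> (\<forall>U. U \<subseteq> E \<longrightarrow> e \<in> U \<longrightarrow> g \<notin> U \<longrightarrow> sum z U < f U)"
      using mv_in_base[OF fin xB eE gE ge x1] mv_in_base[OF fin zB gE eE ge[symmetric] z1] by blast
    thus ?thesis unfolding PU_def PV_def using xfeas zfeas by (meson le_neq_implies_less)
  qed
  define Uf where "Uf g = (SOME U. PU g U)" for g
  define Vf where "Vf g = (SOME V. PV g V)" for g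
  have Uf: "PU g (Uf g)" if "g \<in> G1" for g using that unfolding G1_def Uf_def by (blast intro: someI_ex)
  have Vf: "PV g (Vf g)" if "g \<in> G2" for g
  proof -
    have "g \<in> G" "\<not> (\<exists>U. PU g U)" using that by (auto simp: G1_def G2_def)
    hence "\<exists>V. PV g V" using alt by blast
    thus ?thesis unfolding Vf_def by (rule someI_ex)
  qed
  have finG: "finite G1" "finite G2" using fin by (auto simp: G1_def G2_def G_def)
  define Z where "Z = E \<inter> (\<Inter>g\<in>G1. Uf g)"
  define W where "W = (\<Union>g\<in>G2. Vf g)"
  have Wt: "W \<subseteq> E \<and> sum x W = f W"
    unfolding W_def using tight_Union[OF pm fin xfeas finG(2), of Vf] Vf unfolding PV_def by blast
  have ZE: "Z \<subseteq> E" unfolding Z_def by blast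
  have eZ: "e \<in> Z" using Uf eE unfolding Z_def PU_def by blast
  have eW: "e \<notin> W" using Vf unfolding W_def PV_def by blast
  have finZ: "finite Z" "finite W" using ZE Wt fin finite_subset by auto
  have pw: "\<forall>h\<in>Z - W. z h \<le> x h"
  proof
    fix h assume h: "h \<in> Z - W"
    show "z h \<le> x h"
    proof (rule ccontr)
      assume "\<not> z h \<le> x h"
      hence hG: "h \<in> G" using h ZE by (auto simp: G_def)
      show False
      proof (cases "h \<in> G1")
        case True
        hence "h \<notin> Uf h" using Uf unfolding PU_def by blast
        moreover have "h \<in> Uf h" using h True unfolding Z_def by blast
        ultimately show False by blast
      next
        case False
        hence "h \<in> G2" using hG by (auto simp: G2_def)
        hence "h \<in> W" using Vf unfolding W_def PV_def by blast
        thus False using h by blast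
      qed
    qed
  qed
  have strict: "sum z (Z - W) < sum x (Z - W)"
    by (rule sum_strict_mono_ex1) (use finZ pw eZ eW lt in auto)
  have xsplit: "sum x (Z \<union> W) = sum x W + sum x (Z - W)"
  proof -
    have "sum x (Z \<union> W) = sum x ((Z \<union> W) \<inter> W) + sum x ((Z \<union> W) - W)"
      by (rule sum.Int_Diff) (use finZ in auto)
    moreover have "(Z \<union> W) \<inter> W = W" "(Z \<union> W) - W = Z - W" by auto
    ultimately show ?thesis by simp
  qed
  have zsplit: "sum z Z = sum z (Z \<inter> W) + sum z (Z - W)"
    by (rule sum.Int_Diff) (use finZ in auto)
  have key: "sum x (Z - W) \<le> sum z (Z - W)"
  proof (cases "G1 = {}")
    case True
    hence ZEq: "Z = E" unfolding Z_def by simp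
    have "Z \<inter> W = W" using Wt ZEq by auto
    moreover have "sum x (Z \<union> W) = d" using ZEq Wt xsum by (simp add: Un_absorb2)
    moreover have "sum z W \<le> f W" using zfeas Wt by blast
    moreover have "sum z Z = d" using zsum ZEq by simp
    moreover have "sum x W = f W" using Wt by blast
    ultimately show ?thesis using xsplit zsplit by simp
  next
    case False
    have Zt0: "(\<Inter>g\<in>G1. Uf g) \<subseteq> E \<and> sum z (\<Inter>g\<in>G1. Uf g) = f (\<Inter>g\<in>G1. Uf g)"
      using tight_Inter[OF pm fin zfeas finG(1) False, of Uf] Uf unfolding PU_def by blast
    hence ZI: "Z = (\<Inter>g\<in>G1. Uf g)" unfolding Z_def by blast
    hence Zt: "sum z Z = f Z" using Zt0 by simp
    have sub: "f (Z \<union> W) + f (Z \<inter> W) \<le> f Z + f W" using pm ZE Wt by (auto simp: polymatroid_rank_def)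
    have "Z \<union> W \<subseteq> E" "Z \<inter> W \<subseteq> E" using ZE Wt by auto
    hence "sum x (Z \<union> W) \<le> f (Z \<union> W)" "sum z (Z \<inter> W) \<le> f (Z \<inter> W)" using xfeas zfeas by auto
    thus ?thesis using sub xsplit zsplit Zt Wt by linarith
  qed
  show False using key strict by linarith
qed


lemma Cplus_Cminus: "Cplus c k t = Cminus c (k + 1) t"
  by (simp add: Cplus_def Cminus_def)

lemma reg_shift: "regular c \<Longrightarrow> 1 \<le> k \<Longrightarrow> Cminus c k (T + 1) \<le> Cminus c (k + 1) T"
  by (simp add: regular_def)

lemma reg_mono:
  assumes r: "regular c" and k: "1 \<le> k" and km: "k \<le> m"
  shows "Cminus c k T \<le> Cminus c m T"
  using km
proof (induction m rule: dec_induct)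
  case base thus ?case by simp
next
  case (step n)
  have "1 \<le> n" using k step.hyps by simp
  hence "Cminus c n T \<le> Cminus c n (T + 1)" "Cminus c n (T + 1) \<le> Cminus c (n + 1) T"
    using r by (auto simp: regular_def)
  thus ?case using step.IH by simp
qed

lemma Delta_mono:
  assumes r: "regular c" and km: "k \<le> m"
  shows "c k (T + 1) - c k T \<le> c m (T + 1) - c m T"
  using km
proof (induction m rule: dec_induct)
  case base thus ?case by simp
next
  case (step n)
  have "Cminus c (n + 1) T \<le> Cminus c (n + 1) (T + 1)" using r by (auto simp: regular_def)
  hence "c (Suc n) T - c n T \<le> c (Suc n) (T + 1) - c n (T + 1)" by (simp add: Cminus_def)
  thus ?case using step.IH by simp
qed

lemma obj_mv:
  assumes fin: "finite E" and eE: "e \<in> E" and gE: "g \<in> E" and ne: "g \<noteq> e" and w1: "w e \<ge> 1"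
  shows "objective E C t (\<lambda>h. w h + chi g h - chi e h)
         = objective E C t w + Cplus (C g) (w g) (t g) - Cminus (C e) (w e) (t e)"
proof -
  let ?w = "\<lambda>h. w h + chi g h - chi e h"
  have g2: "g \<in> E - {e}" using gE ne by simp
  have fin2: "finite (E - {e})" using fin by simp
  have split: "(\<Sum>h\<in>E. F h) = F e + (F g + (\<Sum>h\<in>E - {e} - {g}. F h))" for F :: "'a \<Rightarrow> real"
    using sum.remove[OF fin eE, of F] sum.remove[OF fin2 g2, of F] by simp
  have rest: "(\<Sum>h\<in>E - {e} - {g}. C h (?w h) (t h)) = (\<Sum>h\<in>E - {e} - {g}. C h (w h) (t h))"
    by (rule sum.cong) (auto simp: chi_def)
  have we: "?w e = w e - 1" and wg: "?w g = w g + 1" using ne by (auto simp: chi_def)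
  show ?thesis
    unfolding objective_def split[of "\<lambda>h. C h (?w h) (t h)"] split[of "\<lambda>h. C h (w h) (t h)"] rest we wg
    by (simp add: Cplus_def Cminus_def)
qed

lemma obj_shift:
  assumes fin: "finite E" and eE: "e \<in> E"
  shows "objective E C (\<lambda>h. t h + chi e h) w = objective E C t w + (C e (w e) (t e + 1) - C e (w e) (t e))"
proof -
  have split: "(\<Sum>h\<in>E. F h) = F e + (\<Sum>h\<in>E - {e}. F h)" for F :: "'a \<Rightarrow> real"
    using sum.remove[OF fin eE, of F] by simp
  have rest: "(\<Sum>h\<in>E - {e}. C h (w h) (t h + chi e h)) = (\<Sum>h\<in>E - {e}. C h (w h) (t h))"
    by (rule sum.cong) (auto simp: chi_def)
  show ?thesis unfolding objective_def split[of "\<lambda>h. C h (w h) (t h + chi e h)"] split[of "\<lambda>h. C h (w h) (t h)"] rest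
    by (simp add: chi_def)
qed

theorem theorem3p2:
  fixes E :: "'e set" and f :: "'e set \<Rightarrow> nat" and d :: nat
    and t :: "'e \<Rightarrow> nat" and C :: "'e \<Rightarrow> nat \<Rightarrow> nat \<Rightarrow> real"
    and x :: "'e \<Rightarrow> nat" and estar gstar :: 'e
  assumes "finite E" and "E \<noteq> {}"
    and "polymatroid_rank E f"
    and "\<forall>e. e \<notin> E \<longrightarrow> t e = 0"
    and "\<forall>e\<in>E. \<forall>a b. C e a b \<ge> 0"
    and "\<forall>e\<in>E. regular (C e)"
    and "optimal_sol E f C t d x"
    and "estar \<in> E"
    and "Dset E f d x estar \<noteq> {} \<longrightarrow>
           gstar \<in> Dset E f d x estar \<and>
           (\<forall>g\<in>Dset E f d x estar. Cplus (C gstar) (x gstar) (t gstar) \<le> Cplus (C g) (x g) (t g))"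
    and "Dset E f d x estar = {} \<longrightarrow> gstar = estar"
  shows "let t' = (\<lambda>h. t h + chi estar h);
             y = (\<lambda>h. x h + chi gstar h - chi estar h)
         in (objective E C t' x \<le> objective E C t' y \<longrightarrow> optimal_sol E f C t' d x) \<and>
            (objective E C t' y \<le> objective E C t' x \<longrightarrow> optimal_sol E f C t' d y)"
proof -
  define t' where "t' = (\<lambda>h. t h + chi estar h)"
  define y where "y = (\<lambda>h. x h + chi gstar h - chi estar h)"
  note fin = assms(1) and pm = assms(3) and reg = assms(6) and opt = assms(7) and eE = assms(8)
    and hD = assms(9) and hD0 = assms(10)
  have xB: "x \<in> base_set E f d" and xopt: "\<forall>w\<in>base_set E f d. objective E C t x \<le> objective E C t w"
    using opt by (auto simp: optimal_sol_def)
  define a where "a = x estar"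
  have regE: "regular (C estar)" using reg eE by blast
  have A: "objective E C t' x \<le> objective E C t' w" if wB: "w \<in> base_set E f d" and aw: "a \<le> w estar" for w
  proof -
    have "objective E C t' x = objective E C t x + (C estar (x estar) (t estar + 1) - C estar (x estar) (t estar))"
      unfolding t'_def by (rule obj_shift[OF fin eE])
    moreover have "objective E C t' w = objective E C t w + (C estar (w estar) (t estar + 1) - C estar (w estar) (t estar))"
      unfolding t'_def by (rule obj_shift[OF fin eE])
    moreover have "objective E C t x \<le> objective E C t w" using xopt wB by blast
    moreover have "C estar (x estar) (t estar + 1) - C estar (x estar) (t estar) \<le> C estar (w estar) (t estar + 1) - C estar (w estar) (t estar)"
      by (rule Delta_mono[OF regE]) (use aw in \<open>simp add: a_def\<close>)
    ultimately show ?thesis by linarith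
  qed
  have t'g: "t' h = t h" if "h \<noteq> estar" for h using that by (simp add: t'_def chi_def)
  have t'e: "t' estar = t estar + 1" by (simp add: t'_def chi_def)
  have Cl: "objective E C t' y \<le> objective E C t' w"
    if "w \<in> base_set E f d" "w estar < a" "a - w estar = n" for n w
    using that
  proof (induction n arbitrary: w rule: less_induct)
    case (less n w)
    obtain g where gE: "g \<in> E" and ge: "g \<noteq> estar" and xg: "x g < w g"
      and xgB: "(\<lambda>h. x h + chi g h - chi estar h) \<in> base_set E f d"
      and wgB: "(\<lambda>h. w h + chi estar h - chi g h) \<in> base_set E f d"
      using exchange[OF fin pm xB less.prems(1) eE] less.prems(2) unfolding a_def by blast
    have gD: "g \<in> Dset E f d x estar" using gE ge xgB by (simp add: Dset_def)
    hence gsD: "gstar \<in> Dset E f d x estar"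
      and gmin: "Cplus (C gstar) (x gstar) (t gstar) \<le> Cplus (C g) (x g) (t g)" using hD by blast+
    hence gsE: "gstar \<in> E" "gstar \<noteq> estar" by (auto simp: Dset_def)
    have a1: "x estar \<ge> 1" using less.prems(2) unfolding a_def by simp
    have w1: "w g \<ge> 1" using xg by simp
    have regg: "regular (C g)" using reg gE by blast
    have "objective E C t x \<le> objective E C t (\<lambda>h. x h + chi g h - chi estar h)" using xopt xgB by blast
    also have "\<dots> = objective E C t x + Cplus (C g) (x g) (t g) - Cminus (C estar) (x estar) (t estar)"
      by (rule obj_mv[where w=x, OF fin eE gE ge a1])
    finally have o1: "Cminus (C estar) a (t estar) \<le> Cplus (C g) (x g) (t g)" unfolding a_def by simp
    have conv: "Cplus (C g) (x g) (t g) \<le> Cminus (C g) (w g) (t g)"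
      unfolding Cplus_Cminus by (rule reg_mono[OF regg]) (use xg in auto)
    have hy: "objective E C t' y = objective E C t' x + Cplus (C gstar) (x gstar) (t gstar) - Cminus (C estar) a (t estar + 1)"
      unfolding y_def using obj_mv[where w=x and C=C and t=t', OF fin eE gsE(1) gsE(2) a1] t'g[OF gsE(2)] t'e unfolding a_def by simp
    define w' where "w' = (\<lambda>h. w h + chi estar h - chi g h)"
    have w'B: "w' \<in> base_set E f d" using wgB by (simp add: w'_def)
    have w'e: "w' estar = w estar + 1" using ge by (simp add: w'_def chi_def)
    have hw: "objective E C t' w' = objective E C t' w + Cplus (C estar) (w estar) (t estar + 1) - Cminus (C g) (w g) (t g)"
      unfolding w'_def using obj_mv[where w=w and C=C and t=t', OF fin gE eE ge[symmetric] w1] t'g[OF ge] t'e by simp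
    show ?case
    proof (cases "w estar + 1 = a")
      case True
      have "objective E C t' x \<le> objective E C t' w'" by (rule A[OF w'B]) (use w'e True in simp)
      moreover have "Cplus (C estar) (w estar) (t estar + 1) = Cminus (C estar) a (t estar + 1)"
        using True by (simp add: Cplus_Cminus)
      ultimately show ?thesis using hy hw gmin conv by linarith
    next
      case False
      hence lt2: "w estar + 2 \<le> a" using less.prems(2) by simp
      have IH: "objective E C t' y \<le> objective E C t' w'"
        by (rule less.IH[of "a - w' estar" w']) (use w'B w'e less.prems lt2 in auto)
      have "Cplus (C estar) (w estar) (t estar + 1) = Cminus (C estar) (w estar + 1) (t estar + 1)"
        by (simp add: Cplus_Cminus)
      also have "\<dots> \<le> Cminus (C estar) (w estar + 1 + 1) (t estar)" by (rule reg_shift[OF regE]) simp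
      also have "\<dots> \<le> Cminus (C estar) a (t estar)" by (rule reg_mono[OF regE]) (use lt2 in auto)
      finally have "objective E C t' w' \<le> objective E C t' w" using hw o1 conv by linarith
      thus ?thesis using IH by linarith
    qed
  qed
  have yB: "y \<in> base_set E f d"
  proof (cases "Dset E f d x estar = {}")
    case True
    hence "y = x" using hD0 by (simp add: y_def)
    thus ?thesis using xB by simp
  next
    case False
    thus ?thesis using hD by (simp add: Dset_def y_def)
  qed
  have all: "min (objective E C t' x) (objective E C t' y) \<le> objective E C t' w" if w: "w \<in> base_set E f d" for w
  proof (cases "a \<le> w estar")
    case True thus ?thesis using A[OF w] by simp
  next
    case False thus ?thesis using Cl[OF w, of "a - w estar"] by simp
  qed
  have main: "(objective E C t' x \<le> objective E C t' y \<longrightarrow> optimal_sol E f C t' d x) \<and>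
              (objective E C t' y \<le> objective E C t' x \<longrightarrow> optimal_sol E f C t' d y)"
  proof (intro conjI impI)
    assume le: "objective E C t' x \<le> objective E C t' y"
    show "optimal_sol E f C t' d x" unfolding optimal_sol_def
    proof (intro conjI ballI)
      fix w assume "w \<in> base_set E f d"
      thus "objective E C t' x \<le> objective E C t' w" using all le by (metis min.absorb1)
    qed (rule xB)
  next
    assume le: "objective E C t' y \<le> objective E C t' x"
    show "optimal_sol E f C t' d y" unfolding optimal_sol_def
    proof (intro conjI ballI)
      fix w assume "w \<in> base_set E f d"
      thus "objective E C t' y \<le> objective E C t' w" using all le by (metis min.absorb2)
    qed (rule yB)
  qed
  show ?thesis unfolding Let_def using main unfolding t'_def y_def .
qed

end
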